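(* Let $\alpha\in(0,1)$ and $n\in\mathbb{N}^\star$. Suppose there are a constant $C>0$ and nonnegative functions $H_1,\dots,H_{n+1}$ such that $$\int_{\mathbb{T}}H_k\big(|\sin\tfrac\eta2|\big)\,\mathrm{d}\eta\le C\ \ (k=1,\dots,n),\qquad \int_{\mathbb{T}}\big|H_n(|\sin\tfrac\eta2|)\big|^\alpha\big|H_{n+1}(|\sin\tfrac\eta2|)\big|^{1-\alpha}\,\mathrm{d}\eta\le C,$$ and let $\mathbb{K}:\mathbb{T}\times\mathbb{T}\to\mathbb{C}$ satisfy: (1) $\mathbb{K}$ is measurable on $\mathbb{T}\times\mathbb{T}\setminus\{(\theta,\theta):\theta\in\mathbb{T}\}$ and $|\mathbb{K}(\theta,\theta+\eta)|\le H_1(|\sin\tfrac\eta2|)$; (2) for each $\eta\in\mathbb{T}$ the map $\theta\mapsto\mathbb{K}(\theta,\theta+\eta)$ is $n$ times differentiable on $\mathbb{T}$ and $|\partial_\theta^k(\mathbb{K}(\theta,\theta+\eta))|\le H_{k+1}(|\sin\tfrac\eta2|)$ for $k=1,\dots,n$. Then the operator $\mathcal{T}f(\theta)=\int_{\mathbb{T}}\mathbb{K}(\theta,\eta)f(\eta)\,\mathrm{d}\eta$ is continuous from $C^{n-\alpha}(\mathbb{T})$ to $C^{n-\alpha}(\mathbb{T})$ and $$\|\mathcal{T}f\|_{C^{n-\alpha}(\mathbb{T})}\le C_nC\,\|f\|_{C^{n-\alpha}(\mathbb{T})},$$ with $C_n>0$ depending only on $n$.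
   Context: $\mathbb{T}=\mathbb{R}/2\pi\mathbb{Z}$, functions on $\mathbb{T}$ are $2\pi$-periodic, and $C^{n-\alpha}(\mathbb{T})$ denotes the usual Hölder space of $2\pi$-periodic functions with $n-1$ continuous derivatives whose $(n-1)$-th derivative is $(1-\alpha)$-Hölder. *)

theory Defs
  imports "HOL-Analysis.Analysis"
begin

text \<open>Functions on the torus T = R/2piZ are represented as 2pi-periodic functions on the reals.\<close>

definition periodic2pi :: "(real \<Rightarrow> 'a) \<Rightarrow> bool" where
  "periodic2pi f \<longleftrightarrow> (\<forall>x. f (x + 2 * pi) = f x)"

definition hder :: "(real \<Rightarrow> complex) \<Rightarrow> nat \<Rightarrow> real \<Rightarrow> complex" where
  "hder f k = ((\<lambda>g x. vector_derivative g (at x)) ^^ k) f"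

definition holder_semi :: "real \<Rightarrow> (real \<Rightarrow> complex) \<Rightarrow> real" where
  "holder_semi \<beta> g = (SUP p \<in> {p :: real \<times> real. fst p \<noteq> snd p}.
      cmod (g (fst p) - g (snd p)) / \<bar>fst p - snd p\<bar> powr \<beta>)"

text \<open>C^{n-alpha}(T): 2pi-periodic, n-1 times differentiable, (n-1)-th derivative
  (1-alpha)-Hoelder (hence continuous).\<close>
definition holder_space :: "nat \<Rightarrow> real \<Rightarrow> (real \<Rightarrow> complex) \<Rightarrow> bool" where
  "holder_space n \<alpha> f \<longleftrightarrow> periodic2pi f \<and>
     (\<forall>k < n - 1. \<forall>x. (hder f k has_vector_derivative hder f (Suc k) x) (at x)) \<and>
     continuous_on UNIV (hder f (n - 1)) \<and>
     (\<exists>M. \<forall>x y. cmod (hder f (n - 1) x - hder f (n - 1) y) \<le> M * \<bar>x - y\<bar> powr (1 - \<alpha>))"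

definition holder_norm :: "nat \<Rightarrow> real \<Rightarrow> (real \<Rightarrow> complex) \<Rightarrow> real" where
  "holder_norm n \<alpha> f = (\<Sum>k<n. (SUP x. cmod (hder f k x))) + holder_semi (1 - \<alpha>) (hder f (n - 1))"

definition kernel_op :: "(real \<Rightarrow> real \<Rightarrow> complex) \<Rightarrow> (real \<Rightarrow> complex) \<Rightarrow> real \<Rightarrow> complex" where
  "kernel_op K f \<theta> = (\<integral>\<eta>\<in>{0..2*pi}. K \<theta> \<eta> * f \<eta> \<partial>lborel)"

end

theory Submission
  imports Defs
begin

lemma hvd_iff:
  fixes f :: "real \<Rightarrow> 'a::real_normed_vector"
  shows "(f has_vector_derivative D) (at x) \<longleftrightarrow> ((\<lambda>h. (f (x+h) - f x) /\<^sub>R h) \<longlongrightarrow> D) (at 0)"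
proof -
  have bl: "bounded_linear (\<lambda>h::real. h *\<^sub>R D)" by (rule bounded_linear_scaleR_left)
  have eq: "norm (f (x + h) - f x - h *\<^sub>R D) / norm h = norm ((f (x+h) - f x) /\<^sub>R h - D)" if "h \<noteq> 0" for h
  proof -
    have "(f (x+h) - f x) /\<^sub>R h - D = (1/h) *\<^sub>R (f (x + h) - f x - h *\<^sub>R D)"
      using that by (simp add: algebra_simps divide_inverse)
    then show ?thesis using that by (simp add: divide_inverse)
  qed
  have "(f has_vector_derivative D) (at x) \<longleftrightarrow> ((\<lambda>h. norm (f (x + h) - f x - h *\<^sub>R D) / norm h) \<longlongrightarrow> 0) (at 0)"
    unfolding has_vector_derivative_def has_derivative_at using bl by simp
  also have "\<dots> \<longleftrightarrow> ((\<lambda>h. norm ((f (x+h) - f x) /\<^sub>R h - D)) \<longlongrightarrow> 0) (at 0)"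
    by (rule tendsto_cong) (auto simp: eventually_at_filter eq[simplified])
  also have "\<dots> \<longleftrightarrow> ((\<lambda>h. (f (x+h) - f x) /\<^sub>R h) \<longlongrightarrow> D) (at 0)"
    by (simp add: tendsto_norm_zero_iff LIM_zero_iff)
  finally show ?thesis .
qed

lemma mvt_bound:
  fixes f f' :: "real \<Rightarrow> 'a::real_normed_vector"
  assumes "\<And>t. (f has_vector_derivative f' t) (at t)" "\<And>t. norm (f' t) \<le> B"
  shows "norm (f y - f x) \<le> B * \<bar>y - x\<bar>"
proof -
  have "norm (f y - f x) \<le> B * norm (y - x)"
  proof (rule differentiable_bound[where S=UNIV and f'="\<lambda>t h. h *\<^sub>R f' t"])
    show "(f has_derivative (\<lambda>h. h *\<^sub>R f' t)) (at t within UNIV)" for t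
      using assms(1)[of t] unfolding has_vector_derivative_def by simp
    show "onorm (\<lambda>h. h *\<^sub>R f' t) \<le> B" for t
      using assms(2)[of t] by (simp add: onorm_scaleR_left[OF bounded_linear_ident] onorm_id)
  qed auto
  then show ?thesis by simp
qed

lemma deriv_int:
  fixes \<phi> \<phi>' :: "real \<Rightarrow> 'a \<Rightarrow> complex" and g :: "'a \<Rightarrow> real"
  assumes der: "\<And>x t. x \<in> space M \<Longrightarrow> ((\<lambda>t. \<phi> t x) has_vector_derivative \<phi>' t x) (at t)"
    and int: "\<And>t. integrable M (\<phi> t)"
    and g: "integrable M g"
    and bd: "\<And>x t. x \<in> space M \<Longrightarrow> norm (\<phi>' t x) \<le> g x"
  shows "integrable M (\<phi>' t0)"
    and "((\<lambda>t. integral\<^sup>L M (\<phi> t)) has_vector_derivative integral\<^sup>L M (\<phi>' t0)) (at t0)"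
proof -
  have lim: "((\<lambda>h. (\<phi> (t0+h) x - \<phi> t0 x) /\<^sub>R h) \<longlongrightarrow> \<phi>' t0 x) (at 0)" if "x \<in> space M" for x
    using der[OF that, of t0] unfolding hvd_iff .
  have sb: "norm ((\<phi> (t0+h) x - \<phi> t0 x) /\<^sub>R h) \<le> g x" if "x \<in> space M" for x h
  proof (cases "h = 0")
    case True then show ?thesis using bd[OF that, of t0] norm_ge_zero[of "\<phi>' t0 x"] by (simp del: norm_ge_zero)
  next
    case False
    have "norm (\<phi> (t0+h) x - \<phi> t0 x) \<le> g x * \<bar>(t0+h) - t0\<bar>"
      by (rule mvt_bound[where f'="\<lambda>t. \<phi>' t x"]) (use der[OF that] bd[OF that] in auto)
    moreover have "norm ((\<phi> (t0+h) x - \<phi> t0 x) /\<^sub>R h) = norm (\<phi> (t0+h) x - \<phi> t0 x) / \<bar>h\<bar>"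
      by (simp add: divide_inverse_commute)
    ultimately show ?thesis using False by (simp add: pos_divide_le_eq mult.commute)
  qed
  have seq: "(\<lambda>i. (\<phi> (t0 + 1 / Suc i) x - \<phi> t0 x) /\<^sub>R (1 / Suc i)) \<longlonglongrightarrow> \<phi>' t0 x"
    if "x \<in> space M" for x
  proof -
    have "filterlim (\<lambda>i::nat. 1 / real (Suc i)) (at (0::real)) sequentially"
      using LIMSEQ_Suc[OF lim_inverse_n'] by (intro filterlim_atI) (simp_all add: o_def)
    from filterlim_compose[OF lim[OF that] this] show ?thesis by simp
  qed
  have meas: "\<phi>' t0 \<in> borel_measurable M"
    by (rule borel_measurable_LIMSEQ_metric[OF _ seq])
       (use int in \<open>auto intro!: borel_measurable_integrable\<close>)
  show intd: "integrable M (\<phi>' t0)"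
    by (rule Bochner_Integration.integrable_bound[OF g meas]) (use bd in \<open>auto intro!: AE_I2 simp: intro: order_trans[OF _ abs_ge_self]\<close>)
  show "((\<lambda>t. integral\<^sup>L M (\<phi> t)) has_vector_derivative integral\<^sup>L M (\<phi>' t0)) (at t0)"
    unfolding hvd_iff tendsto_at_iff_sequentially
  proof (intro allI impI)
    fix X :: "nat \<Rightarrow> real" assume X: "\<forall>i. X i \<in> UNIV - {0}" "X \<longlonglongrightarrow> 0"
    have eq: "(integral\<^sup>L M (\<phi> (t0 + X i)) - integral\<^sup>L M (\<phi> t0)) /\<^sub>R X i
       = integral\<^sup>L M (\<lambda>x. (\<phi> (t0 + X i) x - \<phi> t0 x) /\<^sub>R X i)" for i
      using int by (simp add: integral_diff)
    have "(\<lambda>i. integral\<^sup>L M (\<lambda>x. (\<phi> (t0 + X i) x - \<phi> t0 x) /\<^sub>R X i)) \<longlonglongrightarrow> integral\<^sup>L M (\<phi>' t0)"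
    proof (rule integral_dominated_convergence[OF meas _ g])
      show "(\<lambda>x. (\<phi> (t0 + X i) x - \<phi> t0 x) /\<^sub>R X i) \<in> borel_measurable M" for i
        using int by (auto intro!: borel_measurable_integrable)
      show "AE x in M. (\<lambda>i. (\<phi> (t0 + X i) x - \<phi> t0 x) /\<^sub>R X i) \<longlonglongrightarrow> \<phi>' t0 x"
      proof (rule AE_I2)
        fix x assume x: "x \<in> space M"
        have "filterlim X (at 0) sequentially"
          using X by (auto intro!: filterlim_atI)
        from filterlim_compose[OF lim[OF x] this] show "(\<lambda>i. (\<phi> (t0 + X i) x - \<phi> t0 x) /\<^sub>R X i) \<longlonglongrightarrow> \<phi>' t0 x" .
      qed
      show "AE x in M. norm ((\<phi> (t0 + X i) x - \<phi> t0 x) /\<^sub>R X i) \<le> g x" for i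
        using sb by (auto intro!: AE_I2)
    qed
    then show "((\<lambda>h. (integral\<^sup>L M (\<phi> (t0 + h)) - integral\<^sup>L M (\<phi> t0)) /\<^sub>R h) \<circ> X) \<longlonglongrightarrow> integral\<^sup>L M (\<phi>' t0)"
      by (simp add: o_def eq)
  qed
qed

lemma transl:
  fixes h :: "real \<Rightarrow> 'a::{banach, second_countable_topology}"
  assumes "set_integrable lborel {a..b} h"
  shows "set_integrable lborel {a-t..b-t} (\<lambda>x. h (x+t))"
    and "(LINT x:{a-t..b-t}|lborel. h (x+t)) = (LINT x:{a..b}|lborel. h x)"
proof -
  let ?F = "\<lambda>x. indicator {a..b} x *\<^sub>R h x"
  have eq: "?F (t + 1 * x) = indicator {a-t..b-t} x *\<^sub>R h (x+t)" for x
    by (simp add: indicator_def algebra_simps)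
  show "set_integrable lborel {a-t..b-t} (\<lambda>x. h (x+t))"
    using assms lborel_integrable_real_affine_iff[of 1 ?F t]
    unfolding set_integrable_def eq by simp
  show "(LINT x:{a-t..b-t}|lborel. h (x+t)) = (LINT x:{a..b}|lborel. h x)"
    using lborel_integral_real_affine[of 1 ?F t] unfolding set_lebesgue_integral_def eq by simp
qed

lemma per_int:
  fixes g :: "real \<Rightarrow> 'a"
  assumes per: "\<And>x. g (x + 2*pi) = g x"
  shows "g (x + 2*pi * of_int k) = g x"
proof -
  have pn: "g (y + 2*pi*real n) = g y" for y n
    by (induction n) (auto simp: algebra_simps per[of "y + 2*pi*real _", simplified algebra_simps])
  show ?thesis
  proof (cases "k \<ge> 0")
    case True then show ?thesis using pn[of x "nat k"] by simp
  next
    case False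
    then have "x = (x + 2*pi * of_int k) + 2*pi*real (nat (-k))" by simp
    then show ?thesis using pn[of "x + 2*pi * of_int k" "nat (-k)"] by metis
  qed
qed

lemma shift_int_aux:
  fixes g :: "real \<Rightarrow> 'a::{banach, second_countable_topology}"
  assumes per: "\<And>x. g (x + 2*pi) = g x" and intg: "set_integrable lborel {0..2*pi} g"
    and r: "0 \<le> r" "r \<le> 2*pi"
  shows "set_integrable lborel {r..r+2*pi} g \<and> (LINT x:{r..r+2*pi}|lborel. g x) = (LINT x:{0..2*pi}|lborel. g x)"
proof -
  have i1: "set_integrable lborel {0..r} g" and i2: "set_integrable lborel {r..2*pi} g"
    using r by (auto intro: set_integrable_subset[OF intg])
  have gm: "g (x - 2*pi) = g x" for x using per[of "x - 2*pi"] by simp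
  from transl[OF i1, of "-2*pi"]
  have i3: "set_integrable lborel {2*pi..r+2*pi} g"
    and e3: "(LINT x:{2*pi..r+2*pi}|lborel. g x) = (LINT x:{0..r}|lborel. g x)"
    by (simp_all add: gm)
  have U1: "{r..r+2*pi} = {r..2*pi} \<union> {2*pi..r+2*pi}" and U2: "{0..2*pi} = {0..r} \<union> {r..2*pi}"
    using r by auto
  have ae1: "AE x in lborel. \<not> (x \<in> {r..2*pi} \<and> x \<in> {2*pi..r+2*pi})"
    using AE_lborel_singleton[of "2*pi"] by eventually_elim auto
  have ae2: "AE x in lborel. \<not> (x \<in> {0..r} \<and> x \<in> {r..2*pi})"
    using AE_lborel_singleton[of "r"] by eventually_elim auto
  have "set_integrable lborel {r..r+2*pi} g"
    unfolding U1 by (intro set_integrable_Un i2 i3) auto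
  moreover have "(LINT x:{r..r+2*pi}|lborel. g x) = (LINT x:{0..2*pi}|lborel. g x)"
    unfolding U1 U2
    by (subst set_integral_Un_AE[OF ae1], simp, simp, fact, fact,
        subst set_integral_Un_AE[OF ae2], simp, simp, fact, fact) (simp add: e3 add.commute)
  ultimately show ?thesis by blast
qed

lemma shift_int:
  fixes g :: "real \<Rightarrow> 'a::{banach, second_countable_topology}"
  assumes per: "\<And>x. g (x + 2*pi) = g x" and intg: "set_integrable lborel {0..2*pi} g"
  shows "set_integrable lborel {0..2*pi} (\<lambda>x. g (x + a))"
    and "(LINT x:{0..2*pi}|lborel. g (x + a)) = (LINT x:{0..2*pi}|lborel. g x)"
proof -
  define k where "k = \<lfloor>a / (2*pi)\<rfloor>"
  define r where "r = a - 2*pi * of_int k"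
  have "of_int k \<le> a / (2*pi)" "a / (2*pi) < of_int k + 1" unfolding k_def by linarith+
  then have "2*pi * of_int k \<le> a" "a < 2*pi * of_int k + 2*pi"
    by (simp_all add: field_simps)
  then have r: "0 \<le> r" "r \<le> 2*pi" unfolding r_def by auto
  from shift_int_aux[OF per intg r]
  have A: "set_integrable lborel {r..r+2*pi} g"
    and B: "(LINT x:{r..r+2*pi}|lborel. g x) = (LINT x:{0..2*pi}|lborel. g x)" by auto
  have ga: "g (x + a) = g (x + r)" for x
    using per_int[where g=g, OF per, of "x + r" k] unfolding r_def by (simp add: algebra_simps)
  from transl[OF A, of r]
  show "set_integrable lborel {0..2*pi} (\<lambda>x. g (x + a))"
    and "(LINT x:{0..2*pi}|lborel. g (x + a)) = (LINT x:{0..2*pi}|lborel. g x)"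
    by (simp_all add: ga B)
qed

lemma pascal_sum:
  fixes a :: "nat \<Rightarrow> 'a::comm_ring_1"
  shows "(\<Sum>j\<le>Suc k. of_nat (Suc k choose j) * a j)
       = (\<Sum>j\<le>k. of_nat (k choose j) * a (Suc j)) + (\<Sum>j\<le>k. of_nat (k choose j) * a j)"
proof -
  have A: "(\<Sum>j\<le>Suc k. of_nat (Suc k choose j) * a j)
      = a 0 + (\<Sum>j\<le>k. of_nat (Suc k choose Suc j) * a (Suc j))"
    by (subst sum.atMost_Suc_shift) simp
  have B: "(\<Sum>j\<le>k. of_nat (Suc k choose Suc j) * a (Suc j)) = (\<Sum>j\<le>k. of_nat (k choose j) * a (Suc j)) + (\<Sum>j\<le>k. of_nat (k choose Suc j) * a (Suc j))"
    by (simp add: sum.distrib algebra_simps)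
  have C: "a 0 + (\<Sum>j\<le>k. of_nat (k choose Suc j) * a (Suc j)) = (\<Sum>j\<le>Suc k. of_nat (k choose j) * a j)"
    unfolding sum.atMost_Suc_shift[where n=k] by simp
  have D: "(\<Sum>j\<le>Suc k. of_nat (k choose j) * a j) = (\<Sum>j\<le>k. of_nat (k choose j) * a j)"
    by (simp add: binomial_eq_0)
  show ?thesis using A B C D by (simp add: algebra_simps)
qed

lemma leibniz_step:
  fixes u v :: "nat \<Rightarrow> real \<Rightarrow> complex"
  assumes du: "\<And>j t. j < m \<Longrightarrow> (u j has_vector_derivative u (Suc j) t) (at t)"
    and dv: "\<And>j t. j < m \<Longrightarrow> (v j has_vector_derivative v (Suc j) t) (at t)"
    and k: "k < m"
  shows "((\<lambda>t. \<Sum>j\<le>k. of_nat (k choose j) * (u j t * v (k-j) t)) has_vector_derivative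
           (\<Sum>j\<le>Suc k. of_nat (Suc k choose j) * (u j t * v (Suc k - j) t))) (at t)"
proof -
  have "((\<lambda>t. \<Sum>j\<le>k. of_nat (k choose j) * (u j t * v (k-j) t)) has_vector_derivative
      (\<Sum>j\<le>k. of_nat (k choose j) * (u (Suc j) t * v (k-j) t + u j t * v (Suc (k-j)) t))) (at t)"
  proof (rule has_vector_derivative_sum)
    fix j assume j: "j \<in> {..k}"
    have D: "((\<lambda>t. u j t * v (k-j) t) has_vector_derivative (u j t * v (Suc (k-j)) t + u (Suc j) t * v (k-j) t)) (at t)"
      using j k by (intro has_vector_derivative_mult du dv) auto
    then show "((\<lambda>t. of_nat (k choose j) * (u j t * v (k-j) t)) has_vector_derivative
        of_nat (k choose j) * (u (Suc j) t * v (k-j) t + u j t * v (Suc (k-j)) t)) (at t)"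
    proof -
      have E: "((\<lambda>t. of_nat (k choose j) * (u j t * v (k-j) t)) has_vector_derivative of_nat (k choose j) * (u j t * v (Suc (k-j)) t + u (Suc j) t * v (k-j) t)) (at t)"
        by (rule has_vector_derivative_mult_right[OF D])
      show ?thesis by (rule has_vector_derivative_eq_rhs[OF E]) (simp add: algebra_simps)
    qed
  qed
  also have "(\<Sum>j\<le>k. of_nat (k choose j) * (u (Suc j) t * v (k-j) t + u j t * v (Suc (k-j)) t))
     = (\<Sum>j\<le>Suc k. of_nat (Suc k choose j) * (u j t * v (Suc k - j) t))"
  proof -
    have e: "\<And>j. j \<in> {..k} \<Longrightarrow> Suc (k - j) = Suc k - j" by auto
    show ?thesis
      by (subst pascal_sum) (auto simp: algebra_simps sum.distrib e intro!: sum.cong)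
  qed
  finally show ?thesis .
qed

lemma seq_lim:
  fixes g :: "real \<Rightarrow> 'a::real_normed_vector"
  assumes "(g has_vector_derivative D) (at t)"
  shows "(\<lambda>i. (g (t + 1 / Suc i) - g t) /\<^sub>R (1 / Suc i)) \<longlonglongrightarrow> D"
proof -
  have "filterlim (\<lambda>i::nat. 1 / real (Suc i)) (at (0::real)) sequentially"
    using LIMSEQ_Suc[OF lim_inverse_n'] by (intro filterlim_atI) (simp_all add: o_def)
  from filterlim_compose[OF assms[unfolded hvd_iff] this] show ?thesis by simp
qed

lemma nnint_to_int:
  fixes h :: "real \<Rightarrow> real"
  assumes hm: "h \<in> borel_measurable borel" and h0: "\<And>x. 0 \<le> h x"
    and A: "A \<in> sets borel" and le: "set_nn_integral lborel A (\<lambda>x. ennreal (h x)) \<le> ennreal C"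
    and C: "0 \<le> C"
  shows "set_integrable lborel A h" "(LINT x:A|lborel. h x) \<le> C"
proof -
  have eq: "(\<integral>\<^sup>+x. ennreal (norm (indicator A x *\<^sub>R h x)) \<partial>lborel) = set_nn_integral lborel A (\<lambda>x. ennreal (h x))"
    by (intro nn_integral_cong) (auto simp: indicator_def h0)
  show si: "set_integrable lborel A h"
    unfolding set_integrable_def integrable_iff_bounded
    using hm A le eq by (auto simp: top_unique intro: le_less_trans)
  have "(\<integral>\<^sup>+x. ennreal (indicator A x *\<^sub>R h x) \<partial>lborel) = ennreal (LINT x:A|lborel. h x)"
    unfolding set_lebesgue_integral_def
    by (rule nn_integral_eq_integral) (use si h0 in \<open>auto simp: set_integrable_def indicator_def\<close>)
  moreover have "(\<integral>\<^sup>+x. ennreal (indicator A x *\<^sub>R h x) \<partial>lborel) = set_nn_integral lborel A (\<lambda>x. ennreal (h x))"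
    by (intro nn_integral_cong) (auto simp: indicator_def)
  ultimately have "ennreal (LINT x:A|lborel. h x) \<le> ennreal C" using le by simp
  then show "(LINT x:A|lborel. h x) \<le> C" using C by (auto simp: ennreal_le_iff2)
qed

lemma per_deriv:
  fixes g g' :: "real \<Rightarrow> 'a::real_normed_vector"
  assumes per: "\<And>x. g (x + 2*pi) = g x" and d: "\<And>x. (g has_vector_derivative g' x) (at x)"
  shows "g' (x + 2*pi) = g' x"
proof -
  have "((\<lambda>y. g (y + 2*pi)) has_vector_derivative g' (x + 2*pi)) (at x)"
  proof -
    have "((\<lambda>y. y + 2*pi) has_vector_derivative 1) (at x)"
      by (auto intro!: derivative_eq_intros)
    from vector_diff_chain_at[OF this d[of "x + 2*pi"]] show ?thesis by (simp add: o_def)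
  qed
  then have "(g has_vector_derivative g' (x + 2*pi)) (at x)" by (simp add: per)
  from vector_derivative_unique_at[OF this d] show ?thesis .
qed

lemma per_bounded:
  fixes g :: "real \<Rightarrow> 'a::real_normed_vector"
  assumes per: "\<And>x. g (x + 2*pi) = g x" and c: "continuous_on UNIV g"
  shows "bdd_above (range (\<lambda>x. norm (g x)))"
proof -
  have "compact (g ` {0..2*pi})"
    by (rule compact_continuous_image) (use c in \<open>auto intro: continuous_on_subset\<close>)
  then obtain B where B: "\<And>y. y \<in> {0..2*pi} \<Longrightarrow> norm (g y) \<le> B"
    by (meson bounded_iff compact_imp_bounded imageI)
  have pn: "g (y + 2*pi*real m) = g y" for y m
    by (induction m) (auto simp: algebra_simps per[of "y + 2*pi*real _", simplified algebra_simps])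
  have "norm (g x) \<le> B" for x
  proof -
    define k where "k = \<lfloor>x / (2*pi)\<rfloor>"
    define y where "y = x - 2*pi * of_int k"
    have "of_int k \<le> x / (2*pi)" "x / (2*pi) < of_int k + 1" unfolding k_def by linarith+
    then have "2*pi * of_int k \<le> x" "x < 2*pi * of_int k + 2*pi"
      by (simp_all add: field_simps)
    then have y: "y \<in> {0..2*pi}" unfolding y_def by auto
    have "g x = g y"
    proof (cases "k \<ge> 0")
      case True
      then have "x = y + 2*pi*real (nat k)" unfolding y_def by simp
      then show ?thesis using pn by metis
    next
      case False
      then have "y = x + 2*pi*real (nat (-k))" unfolding y_def by simp
      then show ?thesis using pn by metis
    qed
    then show ?thesis using B[OF y] by simp
  qed
  then show ?thesis by (auto intro!: bdd_aboveI[where M=B])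
qed

lemma powr_small:
  fixes h \<alpha> :: real
  assumes "0 \<le> h" "h \<le> 1" "0 < \<alpha>" "\<alpha> < 1"
  shows "h \<le> h powr (1 - \<alpha>)"
proof (cases "h = 0")
  case False
  then have "h powr 1 \<le> h powr (1 - \<alpha>)"
    using assms by (intro powr_mono') auto
  then show ?thesis using False assms by simp
qed simp

lemma powr_big:
  fixes h \<alpha> :: real
  assumes "1 \<le> h" "\<alpha> < 1"
  shows "1 \<le> h powr (1 - \<alpha>)"
  using assms by (simp add: ge_one_powr_ge_zero)

lemma min_powr:
  fixes x y \<alpha> :: real
  assumes "0 \<le> x" "0 \<le> y" "0 < \<alpha>" "\<alpha> < 1"
  shows "min x y \<le> x powr \<alpha> * y powr (1 - \<alpha>)"
proof (cases "x \<le> y")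
  case True
  show ?thesis
  proof (cases "x = 0")
    case False
    then have "x = x powr \<alpha> * x powr (1 - \<alpha>)" using assms by (simp add: powr_add[symmetric])
    also have "\<dots> \<le> x powr \<alpha> * y powr (1 - \<alpha>)"
      using assms True by (intro mult_left_mono powr_mono2) auto
    finally show ?thesis using True by simp
  qed simp
next
  case False
  show ?thesis
  proof (cases "y = 0")
    case False
    then have "y = y powr \<alpha> * y powr (1 - \<alpha>)" using assms by (simp add: powr_add[symmetric])
    also have "\<dots> \<le> x powr \<alpha> * y powr (1 - \<alpha>)"
      using assms \<open>\<not> x \<le> y\<close> by (intro mult_right_mono powr_mono2) auto
    finally show ?thesis using \<open>\<not> x \<le> y\<close> by simp
  qed simp
qed

lemma min_powr2:
  fixes a b h \<alpha> :: real
  assumes "0 \<le> a" "0 \<le> b" "0 \<le> h" "0 < \<alpha>" "\<alpha> < 1"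
  shows "min (2*a) (h*b) \<le> 2 * h powr (1 - \<alpha>) * (a powr \<alpha> * b powr (1 - \<alpha>))"
proof -
  have "min (2*a) (h*b) \<le> (2*a) powr \<alpha> * (h*b) powr (1 - \<alpha>)"
    using assms by (intro min_powr) auto
  also have "\<dots> = 2 powr \<alpha> * (h powr (1 - \<alpha>) * (a powr \<alpha> * b powr (1 - \<alpha>)))"
    using assms by (simp add: powr_mult)
  also have "\<dots> \<le> 2 * (h powr (1 - \<alpha>) * (a powr \<alpha> * b powr (1 - \<alpha>)))"
  proof (rule mult_right_mono)
    show "2 powr \<alpha> \<le> (2::real)" using assms powr_mono[of \<alpha> 1 2] by simp
  qed simp
  finally show ?thesis by simp
qed

lemma hder_0[simp]: "hder g 0 = g" by (simp add: hder_def)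
lemma hder_Suc: "hder g (Suc k) = (\<lambda>x. vector_derivative (hder g k) (at x))"
  by (simp add: hder_def)

lemma ffacts:
  fixes f :: "real \<Rightarrow> complex"
  assumes n: "n \<ge> 1" and a: "0 < \<alpha>" "\<alpha> < 1" and hf: "holder_space n \<alpha> f"
  defines "F \<equiv> hder f" and "N \<equiv> holder_norm n \<alpha> f"
  shows "\<And>k x. k < n - 1 \<Longrightarrow> (F k has_vector_derivative F (Suc k) x) (at x)"
    and "\<And>k. k \<le> n - 1 \<Longrightarrow> continuous_on UNIV (F k)"
    and "\<And>k x. k \<le> n - 1 \<Longrightarrow> F k (x + 2*pi) = F k x"
    and "\<And>k x. k \<le> n - 1 \<Longrightarrow> cmod (F k x) \<le> N"
    and "\<And>x y. cmod (F (n-1) x - F (n-1) y) \<le> N * \<bar>x - y\<bar> powr (1 - \<alpha>)"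
    and "0 \<le> N"
proof -
  have per: "periodic2pi f" and dF: "\<And>k x. k < n - 1 \<Longrightarrow> (F k has_vector_derivative F (Suc k) x) (at x)"
    and cF: "continuous_on UNIV (F (n-1))"
    and M: "\<exists>M. \<forall>x y. cmod (F (n-1) x - F (n-1) y) \<le> M * \<bar>x - y\<bar> powr (1 - \<alpha>)"
    using hf unfolding holder_space_def F_def by auto
  show "\<And>k x. k < n - 1 \<Longrightarrow> (F k has_vector_derivative F (Suc k) x) (at x)" by (rule dF)
  show cont: "\<And>k. k \<le> n - 1 \<Longrightarrow> continuous_on UNIV (F k)"
  proof -
    fix k assume k: "k \<le> n - 1"
    show "continuous_on UNIV (F k)"
    proof (cases "k = n - 1")
      case True then show ?thesis using cF by simp
    next
      case False
      then have "k < n - 1" using k by simp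
      then show ?thesis using dF by (intro continuous_on_vector_derivative) (auto intro: has_vector_derivative_at_within)
    qed
  qed
  show perk: "\<And>k x. k \<le> n - 1 \<Longrightarrow> F k (x + 2*pi) = F k x"
  proof -
    fix k x assume "k \<le> n - 1"
    then show "F k (x + 2*pi) = F k x"
    proof (induction k arbitrary: x)
      case 0 then show ?case using per by (simp add: F_def periodic2pi_def)
    next
      case (Suc k)
      then have "k < n - 1" by simp
      have "\<And>x. F k (x + 2*pi) = F k x" using Suc by simp
      from per_deriv[of "F k", OF this dF[OF \<open>k < n - 1\<close>]] show ?case .
    qed
  qed
  have bdd: "\<And>k. k \<le> n - 1 \<Longrightarrow> bdd_above (range (\<lambda>x. cmod (F k x)))"
  proof -
    fix k assume k: "k \<le> n - 1"
    show "bdd_above (range (\<lambda>x. cmod (F k x)))"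
      by (rule per_bounded[of "F k"]) (use perk cont k in auto)
  qed
  define S where "S k = (SUP x. cmod (F k x))" for k
  have FS: "\<And>k x. k \<le> n - 1 \<Longrightarrow> cmod (F k x) \<le> S k"
    unfolding S_def using bdd by (intro cSUP_upper) auto
  have S0: "\<And>k. k \<le> n - 1 \<Longrightarrow> 0 \<le> S k" using FS[of _ 0] by (meson norm_ge_zero order_trans)
  define Q where "Q = (\<lambda>p::real\<times>real. cmod (F (n-1) (fst p) - F (n-1) (snd p)) / \<bar>fst p - snd p\<bar> powr (1 - \<alpha>))"
  define semi where "semi = holder_semi (1 - \<alpha>) (F (n-1))"
  have semi_eq: "semi = (SUP p \<in> {p. fst p \<noteq> snd p}. Q p)"
    unfolding semi_def holder_semi_def Q_def by simp
  obtain M where M: "\<And>x y. cmod (F (n-1) x - F (n-1) y) \<le> M * \<bar>x - y\<bar> powr (1 - \<alpha>)" using M by blast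
  have QM: "Q p \<le> M" if "fst p \<noteq> snd p" for p
  proof -
    have "0 < \<bar>fst p - snd p\<bar> powr (1 - \<alpha>)" using that by simp
    then show ?thesis unfolding Q_def using M[of "fst p" "snd p"] by (simp add: divide_le_eq)
  qed
  have bddQ: "bdd_above (Q ` {p. fst p \<noteq> snd p})" using QM by (auto intro!: bdd_aboveI[where M=M])
  have Qs: "Q p \<le> semi" if "fst p \<noteq> snd p" for p
    unfolding semi_eq using that bddQ by (intro cSUP_upper) auto
  have semi0: "0 \<le> semi"
    using Qs[of "(0,1)"] unfolding Q_def by (smt (verit) divide_nonneg_nonneg norm_ge_zero powr_ge_zero fst_conv snd_conv)
  have hol: "cmod (F (n-1) x - F (n-1) y) \<le> semi * \<bar>x - y\<bar> powr (1 - \<alpha>)" for x y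
  proof (cases "x = y")
    case False
    have "0 < \<bar>x - y\<bar> powr (1 - \<alpha>)" using False by simp
    then show ?thesis using Qs[of "(x,y)"] False unfolding Q_def by (simp add: divide_le_eq)
  qed simp
  have Neq: "N = (\<Sum>k<n. S k) + semi"
    unfolding N_def holder_norm_def S_def semi_def F_def by simp
  have SN: "S k \<le> N" if "k \<le> n - 1" for k
  proof -
    have "S k \<le> (\<Sum>k<n. S k)"
      using that n S0 by (intro member_le_sum) auto
    then show ?thesis using Neq semi0 by simp
  qed
  have sumS0: "0 \<le> (\<Sum>k<n. S k)" using S0 by (intro sum_nonneg) auto
  show "\<And>k x. k \<le> n - 1 \<Longrightarrow> cmod (F k x) \<le> N" using FS SN by (meson order_trans)
  show "\<And>x y. cmod (F (n-1) x - F (n-1) y) \<le> N * \<bar>x - y\<bar> powr (1 - \<alpha>)"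
  proof -
    fix x y
    have "semi * \<bar>x - y\<bar> powr (1 - \<alpha>) \<le> N * \<bar>x - y\<bar> powr (1 - \<alpha>)"
      using Neq sumS0 by (intro mult_right_mono) auto
    then show "cmod (F (n-1) x - F (n-1) y) \<le> N * \<bar>x - y\<bar> powr (1 - \<alpha>)" using hol[of x y] by linarith
  qed
  show "0 \<le> N" using Neq sumS0 semi0 by simp
qed

lemma qfacts:
  fixes K :: "real \<Rightarrow> real \<Rightarrow> complex" and H :: "nat \<Rightarrow> real \<Rightarrow> real" and n :: nat
  assumes H0: "\<And>k x. k \<in> {1..n+1} \<Longrightarrow> 0 \<le> H k x"
    and Km: "(\<lambda>p. K (fst p) (snd p)) \<in> borel_measurable
          (restrict_space borel {p :: real \<times> real. \<forall>m::int. snd p - fst p \<noteq> 2 * pi * of_int m})"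
    and Kb: "\<And>\<theta> \<eta>. sin (\<eta>/2) \<noteq> 0 \<Longrightarrow> cmod (K \<theta> (\<theta> + \<eta>)) \<le> H 1 \<bar>sin (\<eta>/2)\<bar>"
    and KD: "\<And>\<eta>. sin (\<eta>/2) \<noteq> 0 \<Longrightarrow>
          (\<exists>D :: nat \<Rightarrow> real \<Rightarrow> complex. D 0 = (\<lambda>\<theta>. K \<theta> (\<theta> + \<eta>))
             \<and> (\<forall>k<n. \<forall>\<theta>. (D k has_vector_derivative D (Suc k) \<theta>) (at \<theta>))
             \<and> (\<forall>k\<in>{1..n}. \<forall>\<theta>. cmod (D k \<theta>) \<le> H (k+1) \<bar>sin (\<eta>/2)\<bar>))"
  defines "Q \<equiv> \<lambda>j \<theta> \<eta>. if sin (\<eta>/2) \<noteq> 0 then hder (\<lambda>t. K t (t + \<eta>)) j \<theta> else 0"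
  shows "\<And>j \<theta> \<eta>. j < n \<Longrightarrow> ((\<lambda>\<theta>. Q j \<theta> \<eta>) has_vector_derivative Q (Suc j) \<theta> \<eta>) (at \<theta>)"
    and "\<And>j \<theta> \<eta>. j \<le> n \<Longrightarrow> cmod (Q j \<theta> \<eta>) \<le> H (Suc j) \<bar>sin (\<eta>/2)\<bar>"
    and "\<And>j \<theta>. j \<le> n \<Longrightarrow> (\<lambda>\<eta>. Q j \<theta> \<eta>) \<in> borel_measurable borel"
    and "\<And>\<theta> \<eta>. Q 0 \<theta> \<eta> = (if sin (\<eta>/2) \<noteq> 0 then K \<theta> (\<theta> + \<eta>) else 0)"
proof -
  have facts: "(\<forall>j<n. \<forall>\<theta>. ((\<lambda>\<theta>. Q j \<theta> \<eta>) has_vector_derivative Q (Suc j) \<theta> \<eta>) (at \<theta>))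
     \<and> (\<forall>j\<le>n. \<forall>\<theta>. cmod (Q j \<theta> \<eta>) \<le> H (Suc j) \<bar>sin (\<eta>/2)\<bar>)" for \<eta>
  proof (cases "sin (\<eta>/2) \<noteq> 0")
    case False
    then show ?thesis unfolding Q_def using H0 by auto
  next
    case True
    then obtain D where D0: "D 0 = (\<lambda>\<theta>. K \<theta> (\<theta> + \<eta>))"
      and DD: "\<And>k \<theta>. k < n \<Longrightarrow> (D k has_vector_derivative D (Suc k) \<theta>) (at \<theta>)"
      and Db: "\<And>k \<theta>. k \<in> {1..n} \<Longrightarrow> cmod (D k \<theta>) \<le> H (k+1) \<bar>sin (\<eta>/2)\<bar>"
      using KD by blast
    have DQ: "k \<le> n \<Longrightarrow> D k = (\<lambda>\<theta>. Q k \<theta> \<eta>)" for k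
    proof (induction k)
      case 0 then show ?case using True D0 unfolding Q_def by simp
    next
      case (Suc k)
      then have "D k = (\<lambda>\<theta>. Q k \<theta> \<eta>)" and k: "k < n" by auto
      then have "D k = hder (\<lambda>t. K t (t + \<eta>)) k" using True unfolding Q_def by simp
      then show ?case using True vector_derivative_at[OF DD[OF k]] unfolding Q_def
        by (auto simp: hder_Suc)
    qed
    show ?thesis
    proof (intro conjI allI impI)
      fix j \<theta> assume "j < n"
      then show "((\<lambda>\<theta>. Q j \<theta> \<eta>) has_vector_derivative Q (Suc j) \<theta> \<eta>) (at \<theta>)"
        using DD[of j \<theta>] DQ[of j] DQ[of "Suc j"] by simp
    next
      fix j \<theta> assume j: "j \<le> n"
      show "cmod (Q j \<theta> \<eta>) \<le> H (Suc j) \<bar>sin (\<eta>/2)\<bar>"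
      proof (cases j)
        case 0 then show ?thesis using Kb[OF True] True unfolding Q_def by simp
      next
        case (Suc i)
        then show ?thesis using Db[of j \<theta>] DQ[OF j] j by simp
      qed
    qed
  qed
  show D: "\<And>j \<theta> \<eta>. j < n \<Longrightarrow> ((\<lambda>\<theta>. Q j \<theta> \<eta>) has_vector_derivative Q (Suc j) \<theta> \<eta>) (at \<theta>)"
    using facts by blast
  show "\<And>j \<theta> \<eta>. j \<le> n \<Longrightarrow> cmod (Q j \<theta> \<eta>) \<le> H (Suc j) \<bar>sin (\<eta>/2)\<bar>"
    using facts by blast
  show Q0: "\<And>\<theta> \<eta>. Q 0 \<theta> \<eta> = (if sin (\<eta>/2) \<noteq> 0 then K \<theta> (\<theta> + \<eta>) else 0)"
    unfolding Q_def by simp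
  define \<Omega> where "\<Omega> = {\<eta>::real. sin (\<eta>/2) \<noteq> 0}"
  have \<Omega>open: "open \<Omega>" unfolding \<Omega>_def
    by (intro open_Collect_neq continuous_intros) auto
  show "\<And>j \<theta>. j \<le> n \<Longrightarrow> (\<lambda>\<eta>. Q j \<theta> \<eta>) \<in> borel_measurable borel"
  proof -
    fix j \<theta> assume "j \<le> n"
    then show "(\<lambda>\<eta>. Q j \<theta> \<eta>) \<in> borel_measurable borel"
    proof (induction j arbitrary: \<theta>)
      case 0
      define S where "S = {p :: real \<times> real. \<forall>m::int. snd p - fst p \<noteq> 2 * pi * of_int m}"
      have m1: "(\<lambda>\<eta>. (\<theta>, \<theta> + \<eta>)) \<in> measurable (restrict_space borel \<Omega>) (restrict_space borel S)"
      proof (rule measurable_restrict_space3)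
        show "(\<lambda>\<eta>. (\<theta>, \<theta> + \<eta>)) \<in> measurable borel borel"
          by (intro borel_measurable_continuous_onI continuous_intros)
        show "(\<lambda>\<eta>. (\<theta>, \<theta> + \<eta>)) \<in> \<Omega> \<rightarrow> S"
        proof
          fix \<eta> assume "\<eta> \<in> \<Omega>"
          then have ne: "sin (\<eta>/2) \<noteq> 0" unfolding \<Omega>_def by simp
          show "(\<theta>, \<theta> + \<eta>) \<in> S" unfolding S_def
          proof (clarsimp)
            fix m :: int assume "\<eta> = 2 * pi * of_int m"
            then have "\<eta>/2 = of_int m * pi" by simp
            then have "sin (\<eta>/2) = 0" by (metis sin_zero_iff_int2)
            then show False using ne by simp
          qed
        qed
      qed
      have "(\<lambda>\<eta>. K \<theta> (\<theta> + \<eta>)) \<in> borel_measurable (restrict_space borel \<Omega>)"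
        using measurable_compose[OF m1 Km[folded S_def]] by simp
      then have "(\<lambda>\<eta>. if \<eta> \<in> \<Omega> then K \<theta> (\<theta> + \<eta>) else 0) \<in> borel_measurable borel"
        by (subst (asm) measurable_restrict_space_iff) (auto intro: borel_open[OF \<Omega>open])
      then show ?case using Q0 unfolding \<Omega>_def by simp
    next
      case (Suc j)
      then have j: "j < n" and IH: "\<And>\<theta>. (\<lambda>\<eta>. Q j \<theta> \<eta>) \<in> borel_measurable borel" by auto
      show ?case
      proof (rule borel_measurable_LIMSEQ_metric)
        show "(\<lambda>\<eta>. (Q j (\<theta> + 1 / Suc i) \<eta> - Q j \<theta> \<eta>) /\<^sub>R (1 / Suc i)) \<in> borel_measurable borel" for i
          using IH by measurable
        show "(\<lambda>i. (Q j (\<theta> + 1 / Suc i) \<eta> - Q j \<theta> \<eta>) /\<^sub>R (1 / Suc i)) \<longlonglongrightarrow> Q (Suc j) \<theta> \<eta>" for \<eta>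
          by (rule seq_lim[OF D[OF j]])
      qed
    qed
  qed
qed

lemma hvd_shift:
  fixes g :: "real \<Rightarrow> 'a::real_normed_vector"
  assumes "(g has_vector_derivative D) (at (t + c))"
  shows "((\<lambda>t. g (t + c)) has_vector_derivative D) (at t)"
proof -
  have "((\<lambda>t. t + c) has_vector_derivative 1) (at t)" by (auto intro!: derivative_eq_intros)
  from vector_diff_chain_at[OF this assms] show ?thesis by (simp add: o_def)
qed

lemma core:
  fixes n :: nat and \<alpha> C :: real and H :: "nat \<Rightarrow> real \<Rightarrow> real" and K :: "real \<Rightarrow> real \<Rightarrow> complex"
    and f :: "real \<Rightarrow> complex"
  assumes n: "n \<ge> 1" and a0: "0 < \<alpha>" and a1: "\<alpha> < 1" and C0: "0 < C"
    and Hm: "\<And>k. k \<in> {1..n+1} \<Longrightarrow> H k \<in> borel_measurable borel"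
    and H0: "\<And>k x. k \<in> {1..n+1} \<Longrightarrow> 0 \<le> H k x"
    and HI: "\<And>k. k \<in> {1..n} \<Longrightarrow> set_nn_integral lborel {0..2*pi} (\<lambda>\<eta>. ennreal (H k \<bar>sin (\<eta>/2)\<bar>)) \<le> ennreal C"
    and HI2: "set_nn_integral lborel {0..2*pi}
         (\<lambda>\<eta>. ennreal (\<bar>H n \<bar>sin (\<eta>/2)\<bar>\<bar> powr \<alpha> * \<bar>H (n+1) \<bar>sin (\<eta>/2)\<bar>\<bar> powr (1 - \<alpha>))) \<le> ennreal C"
    and Kper: "\<And>x y. K (x + 2*pi) y = K x y \<and> K x (y + 2*pi) = K x y"
    and Km: "(\<lambda>p. K (fst p) (snd p)) \<in> borel_measurable
          (restrict_space borel {p :: real \<times> real. \<forall>m::int. snd p - fst p \<noteq> 2 * pi * of_int m})"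
    and Kb: "\<And>\<theta> \<eta>. sin (\<eta>/2) \<noteq> 0 \<Longrightarrow> cmod (K \<theta> (\<theta> + \<eta>)) \<le> H 1 \<bar>sin (\<eta>/2)\<bar>"
    and KD: "\<And>\<eta>. sin (\<eta>/2) \<noteq> 0 \<Longrightarrow>
          (\<exists>D :: nat \<Rightarrow> real \<Rightarrow> complex. D 0 = (\<lambda>\<theta>. K \<theta> (\<theta> + \<eta>))
             \<and> (\<forall>k<n. \<forall>\<theta>. (D k has_vector_derivative D (Suc k) \<theta>) (at \<theta>))
             \<and> (\<forall>k\<in>{1..n}. \<forall>\<theta>. cmod (D k \<theta>) \<le> H (k+1) \<bar>sin (\<eta>/2)\<bar>))"
    and hf: "holder_space n \<alpha> f"
  shows "(\<forall>\<theta>. set_integrable lborel {0..2*pi} (\<lambda>\<eta>. K \<theta> \<eta> * f \<eta>))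
          \<and> holder_space n \<alpha> (kernel_op K f)
          \<and> holder_norm n \<alpha> (kernel_op K f) \<le> (2^n * (real n + 1)^2) * C * holder_norm n \<alpha> f"
proof -
  define F where "F = hder f"
  define N where "N = holder_norm n \<alpha> f"
  note ff = ffacts[OF n a0 a1 hf, folded F_def N_def]
  have dF: "\<And>k x. k < n - 1 \<Longrightarrow> (F k has_vector_derivative F (Suc k) x) (at x)" by (rule ff(1))
  have cF: "\<And>k. k \<le> n - 1 \<Longrightarrow> continuous_on UNIV (F k)" by (rule ff(2))
  have pF: "\<And>k x. k \<le> n - 1 \<Longrightarrow> F k (x + 2*pi) = F k x" by (rule ff(3))
  have bF: "\<And>k x. k \<le> n - 1 \<Longrightarrow> cmod (F k x) \<le> N" by (rule ff(4))
  have hF: "\<And>x y. cmod (F (n-1) x - F (n-1) y) \<le> N * \<bar>x - y\<bar> powr (1 - \<alpha>)" by (rule ff(5))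
  have N0: "0 \<le> N" by (rule ff(6))
  define Q where "Q \<equiv> \<lambda>j \<theta> \<eta>. if sin (\<eta>/2) \<noteq> 0 then hder (\<lambda>t. K t (t + \<eta>)) j \<theta> else 0"
  note qf = qfacts[OF H0 Km Kb KD]
  have QD: "\<And>j \<theta> \<eta>. j < n \<Longrightarrow> ((\<lambda>\<theta>. Q j \<theta> \<eta>) has_vector_derivative Q (Suc j) \<theta> \<eta>) (at \<theta>)" unfolding Q_def by (rule qf(1))
  have Qb: "\<And>j \<theta> \<eta>. j \<le> n \<Longrightarrow> cmod (Q j \<theta> \<eta>) \<le> H (Suc j) \<bar>sin (\<eta>/2)\<bar>" unfolding Q_def by (rule qf(2))
  have Qm: "\<And>j \<theta>. j \<le> n \<Longrightarrow> (\<lambda>\<eta>. Q j \<theta> \<eta>) \<in> borel_measurable borel" unfolding Q_def by (rule qf(3))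
  have Q0: "\<And>\<theta> \<eta>. Q 0 \<theta> \<eta> = (if sin (\<eta>/2) \<noteq> 0 then K \<theta> (\<theta> + \<eta>) else 0)" unfolding Q_def by (rule qf(4))
  define I where "I = {0..2*pi::real}"
  have Isets: "I \<in> sets lborel" unfolding I_def by simp
  have sm: "(\<lambda>\<eta>::real. \<bar>sin (\<eta>/2)\<bar>) \<in> borel_measurable borel"
    by (intro borel_measurable_continuous_onI continuous_intros) auto
  have Hcm: "\<And>m. m \<in> {1..n+1} \<Longrightarrow> (\<lambda>\<eta>. H m \<bar>sin (\<eta>/2)\<bar>) \<in> borel_measurable borel"
    using measurable_compose[OF sm Hm] by blast
  have HI': "set_integrable lborel I (\<lambda>\<eta>. H m \<bar>sin (\<eta>/2)\<bar>) \<and> (LINT \<eta>:I|lborel. H m \<bar>sin (\<eta>/2)\<bar>) \<le> C"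
    if m: "m \<in> {1..n}" for m
    using nnint_to_int[OF Hcm _ _ HI[OF m]] m C0 H0 unfolding I_def by auto
  define Hs where "Hs \<eta> = (\<Sum>m\<in>{1..n}. H m \<bar>sin (\<eta>/2)\<bar>)" for \<eta>
  define Hx where "Hx \<eta> = \<bar>H n \<bar>sin (\<eta>/2)\<bar>\<bar> powr \<alpha> * \<bar>H (n+1) \<bar>sin (\<eta>/2)\<bar>\<bar> powr (1 - \<alpha>)" for \<eta>
  have Hs_int: "set_integrable lborel I Hs"
  proof -
    have "integrable lborel (\<lambda>\<eta>. \<Sum>m\<in>{1..n}. indicator I \<eta> *\<^sub>R H m \<bar>sin (\<eta>/2)\<bar>)"
      using HI' unfolding set_integrable_def by (intro Bochner_Integration.integrable_sum) auto
    then show ?thesis unfolding set_integrable_def Hs_def scaleR_sum_right .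
  qed
  have Hs_le: "(LINT \<eta>:I|lborel. Hs \<eta>) \<le> real n * C"
  proof -
    have "(LINT \<eta>:I|lborel. Hs \<eta>) = (\<Sum>m\<in>{1..n}. LINT \<eta>:I|lborel. H m \<bar>sin (\<eta>/2)\<bar>)"
      unfolding set_lebesgue_integral_def Hs_def scaleR_sum_right
      by (rule Bochner_Integration.integral_sum) (use HI' in \<open>auto simp: set_integrable_def\<close>)
    also have "\<dots> \<le> (\<Sum>m\<in>{1..n}. C)" using HI' by (intro sum_mono) auto
    finally show ?thesis by simp
  qed
  have Hs0: "0 \<le> Hs \<eta>" for \<eta> unfolding Hs_def using H0 by (intro sum_nonneg) auto
  have Hle: "H (Suc j) \<bar>sin (\<eta>/2)\<bar> \<le> Hs \<eta>" if "j \<le> n - 1" for j \<eta>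
    unfolding Hs_def using that n H0 by (intro member_le_sum) auto
  have Hx_int: "set_integrable lborel I Hx" and Hx_le: "(LINT \<eta>:I|lborel. Hx \<eta>) \<le> C"
  proof -
    have h1: "(\<lambda>\<eta>. H n \<bar>sin (\<eta>/2)\<bar>) \<in> borel_measurable borel" using Hcm n by auto
    have h2: "(\<lambda>\<eta>. H (n+1) \<bar>sin (\<eta>/2)\<bar>) \<in> borel_measurable borel" using Hcm n by auto
    have "Hx \<in> borel_measurable borel" unfolding Hx_def
      by (intro borel_measurable_times measurable_abs_powr h1 h2)
    moreover have "set_nn_integral lborel {0..2*pi} (\<lambda>\<eta>. ennreal (Hx \<eta>)) \<le> ennreal C"
      using HI2 unfolding Hx_def .
    ultimately have "set_integrable lborel {0..2*pi} Hx \<and> (LINT \<eta>:{0..2*pi}|lborel. Hx \<eta>) \<le> C"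
      using nnint_to_int[of Hx "{0..2*pi}" C] C0 unfolding Hx_def by auto
    then
    show "set_integrable lborel I Hx" "(LINT \<eta>:I|lborel. Hx \<eta>) \<le> C" unfolding I_def Hx_def by auto
  qed
  have Hx0: "0 \<le> Hx \<eta>" for \<eta> unfolding Hx_def by simp
  define \<Psi> where "\<Psi> k \<theta> \<eta> = (\<Sum>j\<le>k. of_nat (k choose j) * (Q j \<theta> \<eta> * F (k-j) (\<theta>+\<eta>)))" for k \<theta> \<eta>
  have Fm: "(\<lambda>\<eta>. F i (\<theta>+\<eta>)) \<in> borel_measurable borel" if "i \<le> n-1" for i \<theta>
    by (intro borel_measurable_continuous_onI continuous_on_compose2[OF cF[OF that]])
       (auto intro!: continuous_intros)
  have \<Psi>m: "(\<lambda>\<eta>. \<Psi> k \<theta> \<eta>) \<in> borel_measurable borel" if "k \<le> n-1" for k \<theta>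
    unfolding \<Psi>_def using that
    by (intro borel_measurable_sum borel_measurable_times borel_measurable_const Qm Fm) auto
  have \<Psi>b: "cmod (\<Psi> k \<theta> \<eta>) \<le> 2^k * N * Hs \<eta>" if k: "k \<le> n-1" for k \<theta> \<eta>
  proof -
    have "cmod (\<Psi> k \<theta> \<eta>) \<le> (\<Sum>j\<le>k. cmod (of_nat (k choose j) * (Q j \<theta> \<eta> * F (k-j) (\<theta>+\<eta>))))"
      unfolding \<Psi>_def by (rule norm_sum)
    also have "\<dots> \<le> (\<Sum>j\<le>k. real (k choose j) * (Hs \<eta> * N))"
    proof (rule sum_mono)
      fix j assume j: "j \<in> {..k}"
      have jn: "j \<le> n-1" "j \<le> n" using j k by auto
      have "cmod (Q j \<theta> \<eta>) \<le> Hs \<eta>" using order_trans[OF Qb[OF jn(2), of \<theta> \<eta>] Hle[OF jn(1), of \<eta>]] .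
      moreover have "cmod (F (k-j) (\<theta>+\<eta>)) \<le> N" using bF[of "k-j"] k by auto
      ultimately have "cmod (Q j \<theta> \<eta>) * cmod (F (k-j) (\<theta>+\<eta>)) \<le> Hs \<eta> * N"
        using Hs0 by (intro mult_mono) auto
      then show "cmod (of_nat (k choose j) * (Q j \<theta> \<eta> * F (k-j) (\<theta>+\<eta>))) \<le> real (k choose j) * (Hs \<eta> * N)"
        by (simp add: norm_mult mult_left_mono)
    qed
    also have "\<dots> = 2^k * N * Hs \<eta>"
      by (simp add: sum_distrib_right[symmetric] of_nat_sum[symmetric] choose_row_sum)
    finally show ?thesis .
  qed
  have \<Psi>int: "set_integrable lborel I (\<Psi> k \<theta>)" if k: "k \<le> n-1" for k \<theta>
  proof (rule set_integrable_bound[where f="\<lambda>\<eta>. 2^k * N * Hs \<eta>"])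
    show "set_integrable lborel I (\<lambda>\<eta>. 2^k * N * Hs \<eta>)"
      using Hs_int by simp
    show "set_borel_measurable lborel I (\<Psi> k \<theta>)"
      unfolding set_borel_measurable_def using \<Psi>m[OF k, of \<theta>] Isets by simp
    show "AE x in lborel. x \<in> I \<longrightarrow> cmod (\<Psi> k \<theta> x) \<le> norm (2^k * N * Hs x)"
      using \<Psi>b[OF k] N0 Hs0 by (auto intro!: AE_I2 simp: abs_mult)
  qed
  define G where "G k \<theta> = (LINT \<eta>:I|lborel. \<Psi> k \<theta> \<eta>)" for k \<theta>
  have Gb: "cmod (G k \<theta>) \<le> 2^k * N * (real n * C)" if k: "k \<le> n-1" for k \<theta>
  proof -
    have "cmod (G k \<theta>) \<le> (LINT \<eta>:I|lborel. cmod (\<Psi> k \<theta> \<eta>))"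
      unfolding G_def by (rule set_integral_norm_bound[OF \<Psi>int[OF k]])
    also have "\<dots> \<le> (LINT \<eta>:I|lborel. 2^k * N * Hs \<eta>)"
      using \<Psi>b[OF k] by (intro set_integral_mono set_integrable_norm \<Psi>int[OF k]) (use Hs_int in auto)
    also have "\<dots> = 2^k * N * (LINT \<eta>:I|lborel. Hs \<eta>)" by simp
    also have "\<dots> \<le> 2^k * N * (real n * C)"
      using Hs_le N0 by (intro mult_left_mono) auto
    finally show ?thesis .
  qed
  have GD: "(G k has_vector_derivative G (Suc k) \<theta>) (at \<theta>)" if k: "k < n-1" for k \<theta>
  proof -
    have der: "((\<lambda>t. indicator I \<eta> *\<^sub>R \<Psi> k t \<eta>) has_vector_derivative indicator I \<eta> *\<^sub>R \<Psi> (Suc k) t \<eta>) (at t)" for \<eta> t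
    proof -
      have dv: "((\<lambda>t. F j (t+\<eta>)) has_vector_derivative F (Suc j) (t+\<eta>)) (at t)" if "j < n-1" for j t
      proof -
        have "((\<lambda>t. t+\<eta>) has_vector_derivative 1) (at t)" by (auto intro!: derivative_eq_intros)
        from vector_diff_chain_at[OF this dF[OF that, of "t+\<eta>"]] show ?thesis by (simp add: o_def)
      qed
      have L: "((\<lambda>t. \<Psi> k t \<eta>) has_vector_derivative \<Psi> (Suc k) t \<eta>) (at t)"
        unfolding \<Psi>_def
        by (rule leibniz_step[where u="\<lambda>j t. Q j t \<eta>" and v="\<lambda>j t. F j (t+\<eta>)" and m="n-1", OF _ _ k])
           (use QD dv in auto)
      show ?thesis
        by (rule has_vector_derivative_eq_rhs[OF has_vector_derivative_scaleR[OF DERIV_const L]]) simp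
    qed
    have int: "integrable lborel (\<lambda>\<eta>. indicator I \<eta> *\<^sub>R \<Psi> k t \<eta>)" for t
      using \<Psi>int[of k t] k unfolding set_integrable_def by simp
    have "set_integrable lborel I (\<lambda>\<eta>. 2^(Suc k) * N * Hs \<eta>)" using Hs_int by simp
    then have g: "integrable lborel (\<lambda>\<eta>. indicator I \<eta> *\<^sub>R (2^(Suc k) * N * Hs \<eta>))"
      unfolding set_integrable_def .
    have bd: "norm (indicator I \<eta> *\<^sub>R \<Psi> (Suc k) t \<eta>) \<le> indicator I \<eta> *\<^sub>R (2^(Suc k) * N * Hs \<eta>)" for \<eta> t
      using \<Psi>b[of "Suc k" t \<eta>] k by (auto simp: indicator_def)
    from deriv_int(2)[where M=lborel and \<phi>="\<lambda>t \<eta>. indicator I \<eta> *\<^sub>R \<Psi> k t \<eta>"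
        and \<phi>'="\<lambda>t \<eta>. indicator I \<eta> *\<^sub>R \<Psi> (Suc k) t \<eta>", OF der int g bd]
    show ?thesis unfolding G_def[abs_def] set_lebesgue_integral_def .
  qed
  have Gbase: "set_integrable lborel I (\<lambda>\<eta>. K \<theta> \<eta> * f \<eta>) \<and> kernel_op K f \<theta> = G 0 \<theta>" for \<theta>
  proof -
    define h where "h \<eta> = \<Psi> 0 \<theta> \<eta>" for \<eta>
    have h_eq: "h \<eta> = (if sin (\<eta>/2) \<noteq> 0 then K \<theta> (\<theta> + \<eta>) else 0) * f (\<theta> + \<eta>)" for \<eta>
      unfolding h_def \<Psi>_def F_def using Q0 by simp
    have sinp: "sin ((\<eta> + 2*pi)/2) = - sin (\<eta>/2)" for \<eta>
      by (simp add: add_divide_distrib sin_add)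
    have fper: "f (x + 2*pi) = f x" for x using pF[of 0 x] unfolding F_def by simp
    have hper: "h (\<eta> + 2*pi) = h \<eta>" for \<eta>
      unfolding h_eq sinp using Kper[of \<theta> "\<theta> + \<eta>"] fper[of "\<theta>+\<eta>"] by (simp add: algebra_simps)
    have hint: "set_integrable lborel {0..2*pi} h" using \<Psi>int[of 0 \<theta>] unfolding h_def[abs_def] I_def by simp
    note sh = shift_int[OF hper hint, of "-\<theta>"]
    define X where "X = range (\<lambda>i::int. \<theta> + 2*pi * of_int i)"
    have cX: "countable X" unfolding X_def by simp
    have diff: "indicator I x *\<^sub>R h (x + - \<theta>) = indicator I x *\<^sub>R (K \<theta> x * f x)" if "x \<notin> X" for x
    proof -
      have "sin ((x - \<theta>)/2) \<noteq> 0"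
      proof
        assume "sin ((x - \<theta>)/2) = 0"
        then obtain i :: int where "(x - \<theta>)/2 = of_int i * pi" by (auto simp: sin_zero_iff_int2)
        then have "x = \<theta> + 2*pi * of_int i" by (simp add: field_simps)
        then show False using that unfolding X_def by auto
      qed
      then show ?thesis unfolding h_eq by simp
    qed
    have "integrable lborel (\<lambda>x. indicator I x *\<^sub>R h (x + - \<theta>)) \<longleftrightarrow> integrable lborel (\<lambda>x. indicator I x *\<^sub>R (K \<theta> x * f x))"
      by (rule integrable_discrete_difference[where X=X]) (use cX diff in auto)
    moreover have "integral\<^sup>L lborel (\<lambda>x. indicator I x *\<^sub>R h (x + - \<theta>)) = integral\<^sup>L lborel (\<lambda>x. indicator I x *\<^sub>R (K \<theta> x * f x))"
      by (rule integral_discrete_difference[where X=X]) (use cX diff in auto)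
    ultimately show ?thesis
      using sh unfolding set_integrable_def set_lebesgue_integral_def kernel_op_def G_def h_def I_def by simp
  qed
  have hT: "hder (kernel_op K f) k = G k" if "k \<le> n-1" for k
    using that
  proof (induction k)
    case 0 then show ?case using Gbase by (auto simp: fun_eq_iff)
  next
    case (Suc k)
    then have k: "k < n-1" and IH: "hder (kernel_op K f) k = G k" by auto
    show ?case unfolding hder_Suc IH using vector_derivative_at[OF GD[OF k]] by (simp add: fun_eq_iff)
  qed
  define B where "B = 2^n * (2 * real n + 1) * C * N"
  have B0: "0 \<le> B" unfolding B_def using C0 N0 by simp
  have GH: "cmod (G (n-1) x - G (n-1) y) \<le> B * \<bar>x - y\<bar> powr (1 - \<alpha>)" for x y
  proof -
    define k where "k = n - 1"
    define h where "h = \<bar>x - y\<bar>"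
    define p where "p = h powr (1 - \<alpha>)"
    have h0: "0 \<le> h" and p0: "0 \<le> p" unfolding h_def p_def by auto
    have hp: "(if h \<le> 1 then h else 2) \<le> 2 * p"
      using powr_small[OF h0 _ a0 a1] powr_big[of h \<alpha>] a1 h0 unfolding p_def by auto
    have hp1: "h \<le> 1 \<Longrightarrow> h \<le> p" using powr_small[OF h0 _ a0 a1] unfolding p_def by auto
    have hp2: "\<not> h \<le> 1 \<Longrightarrow> 1 \<le> p" using powr_big[of h \<alpha>] a1 unfolding p_def by auto
    define b where "b \<eta> = (if h \<le> 1 then h else 2) * Hs \<eta> + 2 * p * Hx \<eta>" for \<eta>
    have b0: "0 \<le> b \<eta>" for \<eta> unfolding b_def using Hs0 Hx0 p0 h0 by auto
    have dQ: "cmod (Q j x \<eta> - Q j y \<eta>) \<le> b \<eta>" if j: "j \<le> k" for j \<eta>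
    proof -
      have jn: "j < n" "Suc j \<le> n" using j n unfolding k_def by auto
      have m1: "cmod (Q j x \<eta> - Q j y \<eta>) \<le> H (Suc (Suc j)) \<bar>sin (\<eta>/2)\<bar> * h"
        unfolding h_def
        by (rule mvt_bound[where f'="\<lambda>t. Q (Suc j) t \<eta>"]) (use QD[OF jn(1)] Qb[OF jn(2)] in auto)
      have m2: "cmod (Q j x \<eta> - Q j y \<eta>) \<le> 2 * H (Suc j) \<bar>sin (\<eta>/2)\<bar>"
        using norm_triangle_ineq4[of "Q j x \<eta>" "Q j y \<eta>"] Qb[of j x \<eta>] Qb[of j y \<eta>] jn by auto
      show ?thesis
      proof (cases "j < n - 1")
        case True
        have "H (Suc (Suc j)) \<bar>sin (\<eta>/2)\<bar> \<le> Hs \<eta>" "H (Suc j) \<bar>sin (\<eta>/2)\<bar> \<le> Hs \<eta>"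
          using Hle[of "Suc j" \<eta>] Hle[of j \<eta>] True by auto
        then have "H (Suc (Suc j)) \<bar>sin (\<eta>/2)\<bar> * h \<le> Hs \<eta> * h" "2 * H (Suc j) \<bar>sin (\<eta>/2)\<bar> \<le> 2 * Hs \<eta>"
          using h0 by (auto intro: mult_right_mono)
        then have "cmod (Q j x \<eta> - Q j y \<eta>) \<le> (if h \<le> 1 then h else 2) * Hs \<eta>"
          using m1 m2 by (auto simp: mult.commute)
        then show ?thesis unfolding b_def using p0 Hx0[of \<eta>] by (smt (verit) mult_nonneg_nonneg)
      next
        case False
        then have jj: "j = n - 1" "Suc j = n" "Suc (Suc j) = n + 1" using j n unfolding k_def by auto
        have Hn0: "0 \<le> H n \<bar>sin (\<eta>/2)\<bar>" "0 \<le> H (n+1) \<bar>sin (\<eta>/2)\<bar>" using H0 n by auto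
        have "cmod (Q j x \<eta> - Q j y \<eta>) \<le> min (2 * H n \<bar>sin (\<eta>/2)\<bar>) (h * H (n+1) \<bar>sin (\<eta>/2)\<bar>)"
          using m1 m2 jj by (simp add: mult.commute)
        also have "\<dots> \<le> 2 * p * Hx \<eta>"
          using min_powr2[OF Hn0 h0 a0 a1] Hn0 unfolding p_def Hx_def by simp
        finally show ?thesis unfolding b_def using Hs0[of \<eta>] h0 by (smt (verit) mult_nonneg_nonneg)
      qed
    qed
    have dFF: "cmod (F (k-j) (x+\<eta>) - F (k-j) (y+\<eta>)) \<le> 2 * N * p" if j: "j \<le> k" for j \<eta>
    proof (cases "j = 0")
      case True
      have "N * p \<le> 2 * N * p" using N0 p0 by (simp add: mult_nonneg_nonneg)
      moreover have "cmod (F (k-j) (x+\<eta>) - F (k-j) (y+\<eta>)) \<le> N * p"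
        using hF[of "x+\<eta>" "y+\<eta>"] True unfolding k_def p_def h_def by simp
      ultimately show ?thesis by linarith
    next
      case False
      then have i: "k - j < n - 1" "Suc (k-j) \<le> n - 1" using j unfolding k_def by auto
      have m1: "cmod (F (k-j) (x+\<eta>) - F (k-j) (y+\<eta>)) \<le> N * h"
        unfolding h_def
        by (rule mvt_bound[where f'="\<lambda>t. F (Suc (k-j)) (t+\<eta>)", of "\<lambda>t. F (k-j) (t+\<eta>)", simplified])
           (use dF[OF i(1)] bF[OF i(2)] in \<open>auto intro: hvd_shift\<close>)
      have m2: "cmod (F (k-j) (x+\<eta>) - F (k-j) (y+\<eta>)) \<le> 2 * N"
        using norm_triangle_ineq4[of "F (k-j) (x+\<eta>)" "F (k-j) (y+\<eta>)"] bF[of "k-j" "x+\<eta>"] bF[of "k-j" "y+\<eta>"] i by auto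
      show ?thesis
      proof (cases "h \<le> 1")
        case True
        then have "N * h \<le> N * p" using hp1 N0 by (intro mult_left_mono) auto
        moreover have "N * p \<le> 2 * N * p" using N0 p0 by (simp add: mult_nonneg_nonneg)
        ultimately show ?thesis using m1 by linarith
      next
        case False
        then have "2 * N \<le> 2 * N * p" using hp2 N0 by (simp add: mult_le_cancel_left1)
        then show ?thesis using m2 by linarith
      qed
    qed
    have PW: "cmod (\<Psi> k x \<eta> - \<Psi> k y \<eta>) \<le> 2^k * N * (b \<eta> + 2 * p * Hs \<eta>)" for \<eta>
    proof -
      have "\<Psi> k x \<eta> - \<Psi> k y \<eta> = (\<Sum>j\<le>k. of_nat (k choose j) *
          ((Q j x \<eta> - Q j y \<eta>) * F (k-j) (x+\<eta>) + Q j y \<eta> * (F (k-j) (x+\<eta>) - F (k-j) (y+\<eta>))))"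
        unfolding \<Psi>_def sum_subtractf[symmetric] by (intro sum.cong) (auto simp: algebra_simps)
      also have "cmod \<dots> \<le> (\<Sum>j\<le>k. real (k choose j) * (N * (b \<eta> + 2 * p * Hs \<eta>)))"
      proof (rule order_trans[OF norm_sum sum_mono])
        fix j assume j: "j \<in> {..k}"
        have jn: "j \<le> n - 1" "j \<le> n" "k - j \<le> n - 1" using j unfolding k_def by auto
        have "cmod ((Q j x \<eta> - Q j y \<eta>) * F (k-j) (x+\<eta>)) \<le> b \<eta> * N"
          unfolding norm_mult using dQ[of j \<eta>] bF[OF jn(3)] j b0 by (intro mult_mono) auto
        moreover have "cmod (Q j y \<eta> * (F (k-j) (x+\<eta>) - F (k-j) (y+\<eta>))) \<le> Hs \<eta> * (2 * N * p)"
          unfolding norm_mult using order_trans[OF Qb[OF jn(2)] Hle[OF jn(1)]] dFF[of j \<eta>] j Hs0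
          by (intro mult_mono) auto
        ultimately have "cmod ((Q j x \<eta> - Q j y \<eta>) * F (k-j) (x+\<eta>) + Q j y \<eta> * (F (k-j) (x+\<eta>) - F (k-j) (y+\<eta>)))
            \<le> N * (b \<eta> + 2 * p * Hs \<eta>)"
          by (smt (verit, best) norm_triangle_ineq distrib_left mult.commute mult.left_commute)
        then show "cmod (of_nat (k choose j) * ((Q j x \<eta> - Q j y \<eta>) * F (k-j) (x+\<eta>) + Q j y \<eta> * (F (k-j) (x+\<eta>) - F (k-j) (y+\<eta>))))
            \<le> real (k choose j) * (N * (b \<eta> + 2 * p * Hs \<eta>))"
          by (simp add: norm_mult mult_left_mono)
      qed
      also have "\<dots> = 2^k * N * (b \<eta> + 2 * p * Hs \<eta>)"
        by (simp add: sum_distrib_right[symmetric] of_nat_sum[symmetric] choose_row_sum)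
      finally show ?thesis .
    qed
    have bint: "set_integrable lborel I b" unfolding b_def using Hs_int Hx_int by simp
    have Lb: "(LINT \<eta>:I|lborel. b \<eta>) \<le> 2 * p * (real n * C) + 2 * p * C"
    proof -
      have "(LINT \<eta>:I|lborel. b \<eta>) = (if h \<le> 1 then h else 2) * (LINT \<eta>:I|lborel. Hs \<eta>) + 2 * p * (LINT \<eta>:I|lborel. Hx \<eta>)"
        unfolding b_def using Hs_int Hx_int by simp
      also have "\<dots> \<le> 2 * p * (real n * C) + 2 * p * C"
      proof (rule add_mono)
        have "0 \<le> real n * C" using C0 by simp
        have LI0: "0 \<le> (LINT \<eta>:I|lborel. Hs \<eta>)" unfolding set_lebesgue_integral_def using Hs0 by (intro integral_nonneg_AE AE_I2) (auto simp: indicator_def)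
        show "(if h \<le> 1 then h else 2) * (LINT \<eta>:I|lborel. Hs \<eta>) \<le> 2 * p * (real n * C)"
          using hp Hs_le LI0 h0 p0 by (intro mult_mono) auto
        show "2 * p * (LINT \<eta>:I|lborel. Hx \<eta>) \<le> 2 * p * C"
          using Hx_le p0 by (intro mult_left_mono) auto
      qed
      finally show ?thesis .
    qed
    have "G k x - G k y = (LINT \<eta>:I|lborel. \<Psi> k x \<eta> - \<Psi> k y \<eta>)"
      unfolding G_def using \<Psi>int[of k x] \<Psi>int[of k y] unfolding k_def by simp
    then have "cmod (G k x - G k y) \<le> (LINT \<eta>:I|lborel. cmod (\<Psi> k x \<eta> - \<Psi> k y \<eta>))"
      using set_integral_norm_bound[OF set_integral_diff(1)[OF \<Psi>int[of k x] \<Psi>int[of k y]]] unfolding k_def by simp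
    also have "\<dots> \<le> (LINT \<eta>:I|lborel. 2^k * N * (b \<eta> + 2 * p * Hs \<eta>))"
      using PW bint Hs_int \<Psi>int[of k x] \<Psi>int[of k y] unfolding k_def
      by (intro set_integral_mono set_integrable_norm set_integral_diff(1)) auto
    also have "\<dots> = 2^k * N * ((LINT \<eta>:I|lborel. b \<eta>) + 2 * p * (LINT \<eta>:I|lborel. Hs \<eta>))"
      using bint Hs_int by simp
    also have "\<dots> \<le> 2^k * N * ((2 * p * (real n * C) + 2 * p * C) + 2 * p * (real n * C))"
      using Lb Hs_le p0 N0 by (intro mult_left_mono add_mono) auto
    also have "\<dots> = 2 * 2^k * (2 * real n + 1) * C * N * p" by (simp add: algebra_simps)
    also have "2 * 2^k = (2::real)^n" unfolding k_def using n by (simp add: power_Suc[symmetric])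
    finally show ?thesis unfolding B_def k_def p_def h_def by (simp add: mult.assoc)
  qed
  have Gcont: "continuous_on UNIV (G (n-1))"
  proof (rule continuous_at_imp_continuous_on, intro ballI)
    fix x :: real
    have l1: "((\<lambda>y. \<bar>y - x\<bar>) \<longlongrightarrow> 0) (at x)"
      by (intro tendsto_rabs_zero LIM_zero tendsto_ident_at)
    have "((\<lambda>y. \<bar>y - x\<bar> powr (1 - \<alpha>)) \<longlongrightarrow> 0) (at x)"
      by (rule tendsto_zero_powrI[OF l1 tendsto_const]) (use a1 in auto)
    then have "((\<lambda>y. B * \<bar>y - x\<bar> powr (1 - \<alpha>)) \<longlongrightarrow> 0) (at x)"
      by (rule tendsto_mult_right_zero)
    then have "((\<lambda>y. G (n-1) y - G (n-1) x) \<longlongrightarrow> 0) (at x)"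
      by (rule Lim_null_comparison[rotated]) (use GH in \<open>auto intro!: always_eventually\<close>)
    then show "isCont (G (n-1)) x" unfolding isCont_def by (rule LIM_zero_cancel)
  qed
  have part1: "\<forall>\<theta>. set_integrable lborel {0..2*pi} (\<lambda>\<eta>. K \<theta> \<eta> * f \<eta>)"
    using Gbase unfolding I_def by blast
  have part2: "holder_space n \<alpha> (kernel_op K f)"
    unfolding holder_space_def
  proof (intro conjI allI impI)
    show "periodic2pi (kernel_op K f)"
      unfolding periodic2pi_def kernel_op_def using Kper by simp
    fix k x assume k: "k < n - 1"
    then show "(hder (kernel_op K f) k has_vector_derivative hder (kernel_op K f) (Suc k) x) (at x)"
      using hT[of k] hT[of "Suc k"] GD[OF k] by simp
  next
    show "continuous_on UNIV (hder (kernel_op K f) (n - 1))" using hT[of "n-1"] Gcont by simp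
    show "\<exists>M. \<forall>x y. cmod (hder (kernel_op K f) (n - 1) x - hder (kernel_op K f) (n - 1) y) \<le> M * \<bar>x - y\<bar> powr (1 - \<alpha>)"
      using hT[of "n-1"] GH by auto
  qed
  have sup_le: "(SUP x. cmod (hder (kernel_op K f) k x)) \<le> 2^n * N * (real n * C)" if k: "k < n" for k
  proof (rule cSUP_least)
    fix x
    have "cmod (hder (kernel_op K f) k x) \<le> 2^k * N * (real n * C)" using hT[of k] Gb[of k x] k by simp
    also have "\<dots> \<le> 2^n * N * (real n * C)"
      using k N0 C0 by (intro mult_right_mono) (auto intro: power_increasing)
    finally show "cmod (hder (kernel_op K f) k x) \<le> 2^n * N * (real n * C)" .
  qed simp
  have semi_le: "holder_semi (1 - \<alpha>) (hder (kernel_op K f) (n - 1)) \<le> B"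
    unfolding holder_semi_def
  proof (rule cSUP_least)
    show "{p :: real \<times> real. fst p \<noteq> snd p} \<noteq> {}" by (auto intro!: exI[of _ "(0,1)"])
    fix p :: "real \<times> real" assume "p \<in> {p. fst p \<noteq> snd p}"
    then have pos: "0 < \<bar>fst p - snd p\<bar> powr (1 - \<alpha>)" by simp
    show "cmod (hder (kernel_op K f) (n - 1) (fst p) - hder (kernel_op K f) (n - 1) (snd p)) / \<bar>fst p - snd p\<bar> powr (1 - \<alpha>) \<le> B"
      using GH[of "fst p" "snd p"] hT[of "n-1"] pos by (simp add: divide_le_eq)
  qed
  have "holder_norm n \<alpha> (kernel_op K f) \<le> (\<Sum>k<n. 2^n * N * (real n * C)) + B"
    unfolding holder_norm_def using sup_le semi_le by (intro add_mono sum_mono) auto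
  also have "\<dots> = (2^n * (real n + 1)^2) * C * N"
    unfolding B_def by (simp add: algebra_simps power2_eq_square)
  finally have part3: "holder_norm n \<alpha> (kernel_op K f) \<le> (2^n * (real n + 1)^2) * C * holder_norm n \<alpha> f"
    unfolding N_def .
  show ?thesis using part1 part2 part3 by blast
qed

theorem lemma6p6:
  fixes n :: nat
  assumes "n \<ge> 1"
  shows "\<exists>Cn > 0. \<forall>(\<alpha>::real) (C::real) (H :: nat \<Rightarrow> real \<Rightarrow> real) (K :: real \<Rightarrow> real \<Rightarrow> complex).
    (0 < \<alpha> \<and> \<alpha> < 1 \<and> 0 < C
     \<and> (\<forall>k\<in>{1..n+1}. H k \<in> borel_measurable borel \<and> (\<forall>x. 0 \<le> H k x))
     \<and> (\<forall>k\<in>{1..n}. set_nn_integral lborel {0..2*pi} (\<lambda>\<eta>. ennreal (H k \<bar>sin (\<eta>/2)\<bar>)) \<le> ennreal C)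
     \<and> set_nn_integral lborel {0..2*pi}
         (\<lambda>\<eta>. ennreal (\<bar>H n \<bar>sin (\<eta>/2)\<bar>\<bar> powr \<alpha> * \<bar>H (n+1) \<bar>sin (\<eta>/2)\<bar>\<bar> powr (1 - \<alpha>))) \<le> ennreal C
     \<and> (\<forall>x y. K (x + 2*pi) y = K x y \<and> K x (y + 2*pi) = K x y)
     \<and> (\<lambda>p. K (fst p) (snd p)) \<in> borel_measurable
          (restrict_space borel {p :: real \<times> real. \<forall>m::int. snd p - fst p \<noteq> 2 * pi * of_int m})
     \<and> (\<forall>\<theta> \<eta>. sin (\<eta>/2) \<noteq> 0 \<longrightarrow> cmod (K \<theta> (\<theta> + \<eta>)) \<le> H 1 \<bar>sin (\<eta>/2)\<bar>)
     \<and> (\<forall>\<eta>. sin (\<eta>/2) \<noteq> 0 \<longrightarrow>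
          (\<exists>D :: nat \<Rightarrow> real \<Rightarrow> complex. D 0 = (\<lambda>\<theta>. K \<theta> (\<theta> + \<eta>))
             \<and> (\<forall>k<n. \<forall>\<theta>. (D k has_vector_derivative D (Suc k) \<theta>) (at \<theta>))
             \<and> (\<forall>k\<in>{1..n}. \<forall>\<theta>. cmod (D k \<theta>) \<le> H (k+1) \<bar>sin (\<eta>/2)\<bar>))))
    \<longrightarrow> (\<forall>f. holder_space n \<alpha> f \<longrightarrow>
          (\<forall>\<theta>. set_integrable lborel {0..2*pi} (\<lambda>\<eta>. K \<theta> \<eta> * f \<eta>))
          \<and> holder_space n \<alpha> (kernel_op K f)
          \<and> holder_norm n \<alpha> (kernel_op K f) \<le> Cn * C * holder_norm n \<alpha> f)"
  proof -
  define Cn :: real where "Cn = 2^n * (real n + 1)^2"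
  have Cn0: "Cn > 0" unfolding Cn_def by simp
  show ?thesis
  proof (rule exI[of _ Cn], rule conjI[OF Cn0], intro allI impI)
    fix \<alpha> C :: real and H :: "nat \<Rightarrow> real \<Rightarrow> real" and K :: "real \<Rightarrow> real \<Rightarrow> complex" and f
    assume hyp: "0 < \<alpha> \<and> \<alpha> < 1 \<and> 0 < C
     \<and> (\<forall>k\<in>{1..n+1}. H k \<in> borel_measurable borel \<and> (\<forall>x. 0 \<le> H k x))
     \<and> (\<forall>k\<in>{1..n}. set_nn_integral lborel {0..2*pi} (\<lambda>\<eta>. ennreal (H k \<bar>sin (\<eta>/2)\<bar>)) \<le> ennreal C)
     \<and> set_nn_integral lborel {0..2*pi}
         (\<lambda>\<eta>. ennreal (\<bar>H n \<bar>sin (\<eta>/2)\<bar>\<bar> powr \<alpha> * \<bar>H (n+1) \<bar>sin (\<eta>/2)\<bar>\<bar> powr (1 - \<alpha>))) \<le> ennreal C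
     \<and> (\<forall>x y. K (x + 2*pi) y = K x y \<and> K x (y + 2*pi) = K x y)
     \<and> (\<lambda>p. K (fst p) (snd p)) \<in> borel_measurable
          (restrict_space borel {p :: real \<times> real. \<forall>m::int. snd p - fst p \<noteq> 2 * pi * of_int m})
     \<and> (\<forall>\<theta> \<eta>. sin (\<eta>/2) \<noteq> 0 \<longrightarrow> cmod (K \<theta> (\<theta> + \<eta>)) \<le> H 1 \<bar>sin (\<eta>/2)\<bar>)
     \<and> (\<forall>\<eta>. sin (\<eta>/2) \<noteq> 0 \<longrightarrow>
          (\<exists>D :: nat \<Rightarrow> real \<Rightarrow> complex. D 0 = (\<lambda>\<theta>. K \<theta> (\<theta> + \<eta>))
             \<and> (\<forall>k<n. \<forall>\<theta>. (D k has_vector_derivative D (Suc k) \<theta>) (at \<theta>))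
             \<and> (\<forall>k\<in>{1..n}. \<forall>\<theta>. cmod (D k \<theta>) \<le> H (k+1) \<bar>sin (\<eta>/2)\<bar>)))"
    assume hf: "holder_space n \<alpha> f"
    have c: "(\<forall>\<theta>. set_integrable lborel {0..2*pi} (\<lambda>\<eta>. K \<theta> \<eta> * f \<eta>))
          \<and> holder_space n \<alpha> (kernel_op K f)
          \<and> holder_norm n \<alpha> (kernel_op K f) \<le> (2^n * (real n + 1)^2) * C * holder_norm n \<alpha> f"
      by (rule core[OF assms]) (use hyp hf in auto)
    then show "(\<forall>\<theta>. set_integrable lborel {0..2*pi} (\<lambda>\<eta>. K \<theta> \<eta> * f \<eta>))
          \<and> holder_space n \<alpha> (kernel_op K f)
          \<and> holder_norm n \<alpha> (kernel_op K f) \<le> Cn * C * holder_norm n \<alpha> f"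
      unfolding Cn_def by auto
  qed
qed

end
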